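(* Let $\lambda=\mathrm{diag}(\lambda_x,\lambda_y)$ with $\lambda_x,\lambda_y\in[0,1)$. Fix an index $k$ and given values $h(k)$, $v(k)$, $\omega_k\neq0$, with $\rho_k=(\rho_{xk},\rho_{yk})^T$, $D\rho_k=(D\rho_{xk},D\rho_{yk})^T$, $\eta_k=(\eta_{xk},\eta_{yk})^T:=\Phi(\theta_{k+1})-\Phi(\theta_k)$ and $\Psi=(\Psi_x,\Psi_y)^T$. Suppose $\delta_k>0$ is a root of $$\tfrac12 g\delta^2-\Big\{[D\rho_{xk}+\Psi_x(\theta_k,\omega_k)]\cot\theta_k+[D\rho_{yk}+\Psi_y(\theta_k,\omega_k)]\Big\}\delta+\Big[\eta_{xk}\cot\theta_k+\eta_{yk}+(\lambda_x-1)\rho_{xk}\cot\theta_k+(\lambda_y-1)\rho_{yk}\Big]=0,$$ define $$I_k=-\frac{m\{(\lambda_x-1)\rho_{xk}+\eta_{xk}-[D\rho_{xk}+\Psi_x(\theta_k,\omega_k)]\delta_k\}}{\delta_k\sin\theta_k},$$ assume $I_k\neq0$, and define $r_k=\dfrac{(-1)^{k+1}J\Delta\theta^*}{I_k\delta_k}-\dfrac{J\omega_k}{I_k}$. Then applying $(I_k,r_k)$ and propagating with flight time $\delta_k$ via the hybrid devil-stick dynamics yields $\theta_{k+1}=\theta_k+(-1)^{k+1}\Delta\theta^*$ (so $\delta_k$ is consistent with $\delta_k=(-1)^{k+1}\Delta\theta^*/\omega_{k+1}$, $\omega_{k+1}=\omega_k+I_kr_k/J$) and $\rho_{k+1}=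\lambda\rho_k$.
   Context: Fix constants $m,J,g>0$, $\alpha,\beta>0$, and angles $\theta^{\mathrm{odd}}\in(0,\pi/2)$, $\theta^{\mathrm{even}}\in(\pi/2,\pi)$; set $\Delta\theta^*=\theta^{\mathrm{even}}-\theta^{\mathrm{odd}}>0$. For $k=1,2,\dots$ put $\theta_k=\theta^{\mathrm{odd}}$ if $k$ is odd and $\theta_k=\theta^{\mathrm{even}}$ if $k$ is even, so $\theta_{k+1}=\theta_k+(-1)^{k+1}\Delta\theta^*$ and $\theta_{k+2}=\theta_k$. The hybrid devil-stick dynamics consist of states $h(k)\in\mathbb{R}^2$, $v(k)\in\mathbb{R}^2$, $\omega_k\in\mathbb{R}\setminus\{0\}$, inputs $I_k,r_k\in\mathbb{R}$ and times of flight $\delta_k>0$ satisfying, for all $k\ge1$, $$h(k+1)=h(k)+v(k)\delta_k+\begin{bmatrix}-\sin\theta_k\\ \cos\theta_k\end{bmatrix}\frac{I_k\delta_k}{m}+\begin{bmatrix}0\\-\tfrac12 g\delta_k^2\end{bmatrix},\qquad v(k+1)=v(k)+\begin{bmatrix}-\sin\theta_k\\ \cos\theta_k\end{bmatrix}\frac{I_k}{m}+\begin{bmatrix}0\\-g\delta_k\end{bmatrix},$$ $$\omega_{k+1}=\omega_k+\frac{I_kr_k}{J},\qquad \theta_{k+1}=\theta_k+\omega_{k+1}\delta_k,$$ so that $\delta_k=(-1)^{k+1}\Delta\theta^*/\omega_{k+1}$. Define $\Phi(\theta)=(\alpha\tan\theta,\ \beta)^T$ and $$\Psi(\theta_k,\omega_k)=\begin{bmatrix}\dfrac{(-1)^k\omega_k\alpha}{\Delta\theta^*}(\tan\theta_k-\tan\theta_{k+1})\\[2mm]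 -\dfrac{(-1)^k g\Delta\theta^*}{2\omega_k}\end{bmatrix},$$ and $\rho_k=h(k)-\Phi(\theta_k)$, $D\rho_k=v(k)-\Psi(\theta_k,\omega_k)$. *)

theory Defs
  imports Complex_Main
begin

definition dth :: "real \<Rightarrow> real \<Rightarrow> real" where
  "dth th_odd th_even = th_even - th_odd"

definition theta_seq :: "real \<Rightarrow> real \<Rightarrow> nat \<Rightarrow> real" where
  "theta_seq th_odd th_even k = (if odd k then th_odd else th_even)"

definition Phi_x :: "real \<Rightarrow> real \<Rightarrow> real" where
  "Phi_x alpha th = alpha * tan th"

definition Phi_y :: "real \<Rightarrow> real \<Rightarrow> real" where
  "Phi_y beta th = beta"

text \<open>Psi(theta_k, omega_k), components; the index k determines theta_k and theta_(k+1).\<close>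
definition Psi_x :: "real \<Rightarrow> real \<Rightarrow> real \<Rightarrow> nat \<Rightarrow> real \<Rightarrow> real" where
  "Psi_x alpha th_odd th_even k w =
     (-1) ^ k * w * alpha / dth th_odd th_even *
       (tan (theta_seq th_odd th_even k) - tan (theta_seq th_odd th_even (k + 1)))"

definition Psi_y :: "real \<Rightarrow> real \<Rightarrow> real \<Rightarrow> nat \<Rightarrow> real \<Rightarrow> real" where
  "Psi_y g th_odd th_even k w = - ((-1) ^ k * g * dth th_odd th_even / (2 * w))"

end

theory Submission
  imports Defs
begin

theorem mainTheorem7:
  fixes m J g alpha beta th_odd th_even lam_x lam_y :: real
    and k :: nat
    and hx hy vx vy w \<delta> I r hx' hy' vx' vy' w' :: real
  assumes m_pos: "m > 0" and J_pos: "J > 0" and g_pos: "g > 0"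
    and alpha_pos: "alpha > 0" and beta_pos: "beta > 0"
    and th_odd: "0 < th_odd" "th_odd < pi / 2"
    and th_even: "pi / 2 < th_even" "th_even < pi"
    and k_ge: "k \<ge> 1"
    and lam_x: "0 \<le> lam_x" "lam_x < 1"
    and lam_y: "0 \<le> lam_y" "lam_y < 1"
    and w_nz: "w \<noteq> 0"
    and delta_pos: "\<delta> > 0"
    and root: "let th = theta_seq th_odd th_even k;
                   th' = theta_seq th_odd th_even (k + 1);
                   rho_x = hx - Phi_x alpha th; rho_y = hy - Phi_y beta th;
                   Drho_x = vx - Psi_x alpha th_odd th_even k w;
                   Drho_y = vy - Psi_y g th_odd th_even k w;
                   eta_x = Phi_x alpha th' - Phi_x alpha th;
                   eta_y = Phi_y beta th' - Phi_y beta th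
               in 1/2 * g * \<delta>^2
                  - ((Drho_x + Psi_x alpha th_odd th_even k w) * cot th
                     + (Drho_y + Psi_y g th_odd th_even k w)) * \<delta>
                  + (eta_x * cot th + eta_y + (lam_x - 1) * rho_x * cot th
                     + (lam_y - 1) * rho_y) = 0"
    and I_def: "let th = theta_seq th_odd th_even k;
                   th' = theta_seq th_odd th_even (k + 1);
                   rho_x = hx - Phi_x alpha th;
                   Drho_x = vx - Psi_x alpha th_odd th_even k w;
                   eta_x = Phi_x alpha th' - Phi_x alpha th
               in I = - (m * ((lam_x - 1) * rho_x + eta_x
                         - (Drho_x + Psi_x alpha th_odd th_even k w) * \<delta>))
                      / (\<delta> * sin th)"
    and I_nz: "I \<noteq> 0"
    and r_def: "r = (-1) ^ (k + 1) * J * dth th_odd th_even / (I * \<delta>) - J * w / I"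
    and w_next: "w' = w + I * r / J"
    and hx_next: "hx' = hx + vx * \<delta> + (- sin (theta_seq th_odd th_even k)) * I * \<delta> / m"
    and hy_next: "hy' = hy + vy * \<delta> + cos (theta_seq th_odd th_even k) * I * \<delta> / m
                        - 1/2 * g * \<delta>^2"
    and vx_next: "vx' = vx + (- sin (theta_seq th_odd th_even k)) * I / m"
    and vy_next: "vy' = vy + cos (theta_seq th_odd th_even k) * I / m - g * \<delta>"
  shows "theta_seq th_odd th_even k + w' * \<delta>
           = theta_seq th_odd th_even k + (-1) ^ (k + 1) * dth th_odd th_even
       \<and> theta_seq th_odd th_even k + (-1) ^ (k + 1) * dth th_odd th_even
           = theta_seq th_odd th_even (k + 1)
       \<and> w' \<noteq> 0
       \<and> \<delta> = (-1) ^ (k + 1) * dth th_odd th_even / w'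
       \<and> hx' - Phi_x alpha (theta_seq th_odd th_even (k + 1))
           = lam_x * (hx - Phi_x alpha (theta_seq th_odd th_even k))
       \<and> hy' - Phi_y beta (theta_seq th_odd th_even (k + 1))
           = lam_y * (hy - Phi_y beta (theta_seq th_odd th_even k))"
proof -
  define th where "th = theta_seq th_odd th_even k"
  define th' where "th' = theta_seq th_odd th_even (k+1)"
  define D where "D = dth th_odd th_even"
  have D_pos: "D > 0" using th_odd th_even by (simp add: D_def dth_def)
  have th_rng: "0 < th \<and> th < pi" using th_odd th_even
    by (auto simp: th_def theta_seq_def)
  have sn: "sin th \<noteq> 0" using th_rng sin_gt_zero by fastforce
  have step: "th + (-1)^(k+1) * D = th'"
    by (cases "odd k") (auto simp: th_def th'_def theta_seq_def D_def dth_def)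
  have wd: "w' * \<delta> = (-1)^(k+1) * D"
    using I_nz delta_pos J_pos unfolding w_next r_def D_def[symmetric]
    by (simp add: field_simps)
  have wnz: "w' \<noteq> 0" using wd D_pos by auto
  have dl: "\<delta> = (-1)^(k+1) * D / w'" using wd wnz by (simp add: field_simps)
  have Ieq: "I * \<delta> * sin th / m = - ((lam_x - 1) * (hx - Phi_x alpha th)
       + (Phi_x alpha th' - Phi_x alpha th) - vx * \<delta>)"
    using I_def sn delta_pos m_pos unfolding th_def[symmetric] th'_def[symmetric] Let_def
    by (simp add: field_simps)
  have rt: "1/2 * g * \<delta>^2 - (vx * cot th + vy) * \<delta>
      + ((Phi_x alpha th' - Phi_x alpha th) * cot th + (lam_x - 1) * (hx - Phi_x alpha th) * cot th
         + (lam_y - 1) * (hy - beta)) = 0"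
    using root unfolding th_def[symmetric] th'_def[symmetric] Let_def
    by (simp add: Phi_y_def)
  have hx1: "hx' - Phi_x alpha th' = lam_x * (hx - Phi_x alpha th)"
  proof -
    have "hx' = hx + vx * \<delta> - I * \<delta> * sin th / m" unfolding hx_next th_def by simp
    then show ?thesis using Ieq by (simp add: algebra_simps)
  qed
  have cI: "cos th * I * \<delta> / m = cot th * (I * \<delta> * sin th / m)"
    using sn by (simp add: cot_def field_simps)
  have hy1: "hy' - Phi_y beta th' = lam_y * (hy - Phi_y beta th)"
  proof -
    have "hy' = hy + vy * \<delta> + cos th * I * \<delta> / m - 1/2 * g * \<delta>^2"
      unfolding hy_next th_def by simp
    also have "... = hy + vy * \<delta> + cot th * (- ((lam_x - 1) * (hx - Phi_x alpha th)
       + (Phi_x alpha th' - Phi_x alpha th) - vx * \<delta>)) - 1/2 * g * \<delta>^2"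
      using cI Ieq by simp
    finally have e: "hy' = hy + vy * \<delta> + cot th * (- ((lam_x - 1) * (hx - Phi_x alpha th)
       + (Phi_x alpha th' - Phi_x alpha th) - vx * \<delta>)) - 1/2 * g * \<delta>^2" .
    show ?thesis unfolding Phi_y_def e using rt by (simp add: algebra_simps)
  qed
  show ?thesis
    using wd step wnz dl hx1 hy1
    unfolding th_def th'_def D_def by simp
qed

end
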